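(* Let $f:X\to Y$ be a continuous map between $T_0$-spaces. Then $f$ is locally closed if and only if the frame morphism $\Omega f=f^{-1}:\Omega Y\to\Omega X$ is a D-morphism.
   Context: $\Omega X$ is the frame of open sets of a space $X$. A point $x\in X$ is locally closed if $\{x\}$ is closed in some open neighborhood of $x$. A continuous map is locally closed if it maps locally closed points to locally closed points. For a frame $L$ and elements $a<b$, $a\lessdot b$ means there is no $x$ with $a<x<b$. A filter $F$ of a frame $L$ is slicing if it is prime and there exist $b\in F$, $a\notin F$ with $a\lessdot b$. A frame morphism $h:L\to M$ is a D-morphism if $h^{-1}(F)$ is a slicing filter of $L$ for every slicing filter $F$ of $M$. *)

theory Defs
  imports "HOL-Analysis.Analysis"
begin

text \<open>The frame Omega X of open sets of X, ordered by inclusion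
  (meets are intersections, binary joins are unions, top is topspace X).\<close>

definition Omega :: "'a topology \<Rightarrow> 'a set set" where
  "Omega X = {U. openin X U}"

definition locally_closed_point :: "'a topology \<Rightarrow> 'a \<Rightarrow> bool" where
  "locally_closed_point X x \<longleftrightarrow> x \<in> topspace X \<and>
     (\<exists>U. openin X U \<and> x \<in> U \<and> closedin (subtopology X U) {x})"

definition locally_closed_map :: "'a topology \<Rightarrow> 'b topology \<Rightarrow> ('a \<Rightarrow> 'b) \<Rightarrow> bool" where
  "locally_closed_map X Y f \<longleftrightarrow>
     (\<forall>x. locally_closed_point X x \<longrightarrow> locally_closed_point Y (f x))"

definition frame_filter :: "'a topology \<Rightarrow> 'a set set \<Rightarrow> bool" where
  "frame_filter X F \<longleftrightarrow> F \<subseteq> Omega X \<and> F \<noteq> {} \<and>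
     (\<forall>U\<in>F. \<forall>V\<in>F. U \<inter> V \<in> F) \<and>
     (\<forall>U\<in>F. \<forall>V\<in>Omega X. U \<subseteq> V \<longrightarrow> V \<in> F)"

definition prime_frame_filter :: "'a topology \<Rightarrow> 'a set set \<Rightarrow> bool" where
  "prime_frame_filter X F \<longleftrightarrow> frame_filter X F \<and> {} \<notin> F \<and>
     (\<forall>U\<in>Omega X. \<forall>V\<in>Omega X. U \<union> V \<in> F \<longrightarrow> U \<in> F \<or> V \<in> F)"

definition frame_covers :: "'a topology \<Rightarrow> 'a set \<Rightarrow> 'a set \<Rightarrow> bool" where
  "frame_covers X a b \<longleftrightarrow> a \<in> Omega X \<and> b \<in> Omega X \<and> a \<subset> b \<and>
     \<not> (\<exists>c\<in>Omega X. a \<subset> c \<and> c \<subset> b)"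

definition slicing_filter :: "'a topology \<Rightarrow> 'a set set \<Rightarrow> bool" where
  "slicing_filter X F \<longleftrightarrow> prime_frame_filter X F \<and>
     (\<exists>b\<in>F. \<exists>a\<in>Omega X. a \<notin> F \<and> frame_covers X a b)"

definition Omega_map :: "'a topology \<Rightarrow> ('a \<Rightarrow> 'b) \<Rightarrow> 'b set \<Rightarrow> 'a set" where
  "Omega_map X f V = f -` V \<inter> topspace X"

definition D_morphism :: "'b topology \<Rightarrow> 'a topology \<Rightarrow> ('b set \<Rightarrow> 'a set) \<Rightarrow> bool" where
  "D_morphism Y X h \<longleftrightarrow>
     (\<forall>F. slicing_filter X F \<longrightarrow> slicing_filter Y {V \<in> Omega Y. h V \<in> F})"

end

theory Submission
  imports Defs
begin

definition nbhd :: "'a topology \<Rightarrow> 'a \<Rightarrow> 'a set set" where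
  "nbhd X x = {U. openin X U \<and> x \<in> U}"

lemma lc_iff:
  "locally_closed_point X x \<longleftrightarrow> x \<in> topspace X \<and> (\<exists>U. openin X U \<and> x \<in> U \<and> openin X (U - {x}))"
proof -
  have "closedin (subtopology X U) {x} \<longleftrightarrow> openin X (U - {x})" if "openin X U" "x \<in> U" for U
  proof -
    have tU: "topspace (subtopology X U) = U"
      using that openin_subset by (auto simp: topspace_subtopology)
    show ?thesis unfolding closedin_def tU
      using openin_open_subtopology[OF that(1), of "U - {x}"] that by auto
  qed
  then show ?thesis unfolding locally_closed_point_def by blast
qed

lemma nbhd_slicing:
  assumes "locally_closed_point X x"
  shows "slicing_filter X (nbhd X x)"
proof -
  from assms obtain U where U: "openin X U" "x \<in> U" "openin X (U - {x})" and xt: "x \<in> topspace X"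
    by (auto simp: lc_iff)
  have pf: "prime_frame_filter X (nbhd X x)"
    unfolding prime_frame_filter_def frame_filter_def nbhd_def Omega_def
    using xt by auto
  have cov: "frame_covers X (U - {x}) U"
    unfolding frame_covers_def Omega_def using U by auto
  show ?thesis unfolding slicing_filter_def
    using pf cov U by (auto simp: nbhd_def Omega_def intro!: bexI[of _ U] bexI[of _ "U - {x}"])
qed

lemma slicing_nbhd:
  assumes t0: "t0_space X" and F: "slicing_filter X F"
  shows "\<exists>x. locally_closed_point X x \<and> F = nbhd X x"
proof -
  from F obtain b a where bF: "b \<in> F" and aO: "a \<in> Omega X" and aF: "a \<notin> F"
    and cov: "frame_covers X a b" and pf: "prime_frame_filter X F"
    unfolding slicing_filter_def by blast
  have ob: "openin X b" and oa: "openin X a" and ab: "a \<subset> b"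
    and nc: "\<And>c. openin X c \<Longrightarrow> a \<subset> c \<Longrightarrow> c \<subset> b \<Longrightarrow> False"
    using cov unfolding frame_covers_def Omega_def by auto
  obtain x where xba: "x \<in> b" "x \<notin> a" using ab by auto
  have single: "b - a = {x}"
  proof (rule ccontr)
    assume "b - a \<noteq> {x}"
    then obtain y where y: "y \<in> b" "y \<notin> a" "y \<noteq> x" using xba by auto
    have tx: "x \<in> topspace X" "y \<in> topspace X" using ob xba y openin_subset by auto
    then obtain W where W: "openin X W" "x \<notin> W \<longleftrightarrow> y \<in> W"
      using t0 y(3) unfolding t0_space_def by metis
    let ?c = "a \<union> (W \<inter> b)"
    have "openin X ?c" using W oa ob by auto
    moreover have "a \<subset> ?c" "?c \<subset> b" using ab W xba y by (cases "x \<in> W"; blast)+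
    ultimately show False using nc by blast
  qed
  have aeq: "a = b - {x}" using single ab by auto
  have xt: "x \<in> topspace X" using ob xba openin_subset by auto
  have lc: "locally_closed_point X x" unfolding lc_iff using xt ob xba oa aeq by auto
  have ff: "frame_filter X F" and prime: "\<And>U V. U \<in> Omega X \<Longrightarrow> V \<in> Omega X \<Longrightarrow> U \<union> V \<in> F \<Longrightarrow> U \<in> F \<or> V \<in> F"
    using pf unfolding prime_frame_filter_def by auto
  have up: "\<And>U V. U \<in> F \<Longrightarrow> openin X V \<Longrightarrow> U \<subseteq> V \<Longrightarrow> V \<in> F"
    and meet: "\<And>U V. U \<in> F \<Longrightarrow> V \<in> F \<Longrightarrow> U \<inter> V \<in> F" and sub: "F \<subseteq> Omega X"
    using ff unfolding frame_filter_def Omega_def by auto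
  have "F = nbhd X x"
  proof
    show "F \<subseteq> nbhd X x"
    proof
      fix V assume V: "V \<in> F"
      have oV: "openin X V" using V sub by (auto simp: Omega_def)
      have "x \<in> V"
      proof (rule ccontr)
        assume "x \<notin> V"
        then have "V \<inter> b \<subseteq> a" using aeq by auto
        moreover have "V \<inter> b \<in> F" using meet V bF by auto
        ultimately show False using up oa aF by blast
      qed
      then show "V \<in> nbhd X x" using oV by (auto simp: nbhd_def)
    qed
  next
    show "nbhd X x \<subseteq> F"
    proof
      fix V assume "V \<in> nbhd X x"
      then have oV: "openin X V" and xV: "x \<in> V" by (auto simp: nbhd_def)
      have "a \<union> (V \<inter> b) = b" using aeq xV xba by auto
      then have "a \<union> (V \<inter> b) \<in> F" using bF by simp
      moreover have "V \<inter> b \<in> Omega X" using oV ob by (auto simp: Omega_def)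
      ultimately have "V \<inter> b \<in> F" using prime aO aF by blast
      then show "V \<in> F" using up oV by blast
    qed
  qed
  then show ?thesis using lc by blast
qed

lemma preimage_nbhd:
  assumes "continuous_map X Y f" "x \<in> topspace X"
  shows "{V \<in> Omega Y. Omega_map X f V \<in> nbhd X x} = nbhd Y (f x)"
  using assms unfolding nbhd_def Omega_def Omega_map_def
  by (auto simp: continuous_map_def)

theorem proposition5p10:
  fixes X :: "'a topology" and Y :: "'b topology" and f :: "'a \<Rightarrow> 'b"
  assumes "t0_space X" and "t0_space Y" and "continuous_map X Y f"
  shows "locally_closed_map X Y f \<longleftrightarrow> D_morphism Y X (Omega_map X f)"
proof
  assume lcm: "locally_closed_map X Y f"
  show "D_morphism Y X (Omega_map X f)" unfolding D_morphism_def
  proof (intro allI impI)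
    fix F assume "slicing_filter X F"
    then obtain x where x: "locally_closed_point X x" "F = nbhd X x"
      using slicing_nbhd[OF assms(1)] by blast
    have "x \<in> topspace X" using x(1) by (simp add: locally_closed_point_def)
    then have "{V \<in> Omega Y. Omega_map X f V \<in> F} = nbhd Y (f x)"
      using preimage_nbhd[OF assms(3)] x(2) by simp
    moreover have "locally_closed_point Y (f x)" using lcm x(1) unfolding locally_closed_map_def by blast
    ultimately show "slicing_filter Y {V \<in> Omega Y. Omega_map X f V \<in> F}"
      using nbhd_slicing by simp
  qed
next
  assume D: "D_morphism Y X (Omega_map X f)"
  show "locally_closed_map X Y f" unfolding locally_closed_map_def
  proof (intro allI impI)
    fix x assume x: "locally_closed_point X x"
    have xt: "x \<in> topspace X" using x by (simp add: locally_closed_point_def)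
    have fxt: "f x \<in> topspace Y" using assms(3) xt by (meson continuous_map_def funcset_mem)
    have "slicing_filter Y {V \<in> Omega Y. Omega_map X f V \<in> nbhd X x}"
      using D nbhd_slicing[OF x] unfolding D_morphism_def by blast
    then have "slicing_filter Y (nbhd Y (f x))"
      using preimage_nbhd[OF assms(3) xt] by simp
    then obtain y where y: "locally_closed_point Y y" "nbhd Y (f x) = nbhd Y y"
      using slicing_nbhd[OF assms(2)] by blast
    have yt: "y \<in> topspace Y" using y(1) by (simp add: locally_closed_point_def)
    have "f x = y"
    proof (rule ccontr)
      assume "f x \<noteq> y"
      then obtain W where W: "openin Y W" "f x \<notin> W \<longleftrightarrow> y \<in> W"
        using assms(2) fxt yt unfolding t0_space_def by blast
      have "W \<in> nbhd Y (f x) \<longleftrightarrow> W \<in> nbhd Y y" using y(2) by simp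
      then show False using W unfolding nbhd_def by auto
    qed
    then show "locally_closed_point Y (f x)" using y(1) by simp
  qed
qed

end
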